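(* Let $(\bm{A}_p,\mathcal{R}_p)$ be a Partial Double Description (PDD) of a polyhedral cone $\mathcal{P}\subseteq\mathbb{R}^d$ (in homogenized coordinates), and let $\bm{A}_q$ be the (exact) constraint matrix of a polyhedral cone $\mathcal{Q}=\{\bm{x}\in\mathbb{R}^d \mid \bm{A}_q\bm{x}\ge 0\}$. Let $(\bm{A}',\mathcal{R}'_p)$ be the output of the Batch Intersection procedure applied to $(\bm{A}_p,\mathcal{R}_p)$ and $\bm{A}_q$. Then $$\{\bm{x}\in\mathbb{R}^d \mid \bm{A}'\bm{x}\ge 0\}=\{\bm{x}\in\mathbb{R}^d \mid \bm{A}_p\bm{x}\ge 0 \wedge \bm{A}_q\bm{x}\ge 0\},$$ and $$\Big\{\sum_{\bm{r}_i\in\mathcal{R}'_p}\lambda_i\bm{r}_i \;\Big|\; \sum_i\lambda_i\le 1,\ \lambda_i\in\mathbb{R}^+_0\Big\}\subseteq\{\bm{x}\in\mathbb{R}^d \mid \bm{A}_p\bm{x}\ge 0 \wedge \bm{A}_q\bm{x}\ge 0\}.$$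
   Context: A polyhedral cone is described either by constraints ($\mathcal{H}$-representation) $\{\bm{x}\mid \bm{A}\bm{x}\ge 0\}$ (rows of $\bm{A}$ are constraints $\bm{a}$) or by a finite set of generating rays ($\mathcal{V}$-representation). A Partial Double Description (PDD) of a cone is a pair $(\bm{A},\mathcal{R})$ of a constraint matrix $\bm{A}$ and a finite set of rays $\mathcal{R}$ such that $\bm{a}\bm{r}\ge 0$ for every row $\bm{a}$ of $\bm{A}$ and every $\bm{r}\in\mathcal{R}$ (i.e., the rays under-approximate the cone defined by $\bm{A}$). A constraint $\bm{a}_j$ is active for a ray $\bm{r}_i$ if $\bm{a}_j\bm{r}_i=0$; the incidence matrix is $\mathcal{I}_{i,j}=1$ if $\bm{a}_j\bm{r}_i=0$ and $0$ otherwise, with $\mathcal{I}_i\subseteq\mathcal{I}_j$ iff $\mathcal{I}_{i,k}\le\mathcal{I}_{j,k}$ for all $k$. A PDD is A-irredundant if $\mathcal{I}_i\not\subseteq\mathcal{I}_j$ for all $i\ne j$; it is made A-irredundant by removing rays whose set of active constraints is a subset of (or equal to) that of another remaining ray until this holds. Batch Intersection, input a PDD $(\bm{A}_p,\mathcal{R}_p)$ and a constraint matrix $\bm{A}_q$: partition $\mathcal{R}_p$ into $\mathcal{R}_-=\{\bm{r}\mid \min(\bm{A}_q\bm{r})<0\}$, $\mathcal{R}_+=\{\bm{r}\mid \min(\bm{A}_q\bm{r})>0\}$ and $\mathcal{R}_0$ (the rest). For every pair $(\bm{r}_+,\bm{r}_-)\in\mathcal{R}_+\times\mathcal{R}_-$,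 compute by ray-shooting the point $\bm{r}_*$ on the segment from $\bm{r}_+$ to $\bm{r}_-$ where it first (as seen from $\bm{r}_+$) meets a hyperplane $\{\bm{x}\mid\tilde{\bm{a}}\bm{x}=0\}$ with $\tilde{\bm{a}}$ a row of $\bm{A}_q$; collect these in $\mathcal{R}_*$. Form the PDD $(\bm{A}_p\cup\bm{A}_q,\ \mathcal{R}_0\cup\mathcal{R}_+\cup\mathcal{R}_* )$, make it A-irredundant, and return it as $(\bm{A}',\mathcal{R}'_p)$. *)

theory Defs
  imports "HOL-Analysis.Analysis"
begin

text \<open>Constraint matrices are represented by the finite set of their rows,
  rays by a finite set of vectors in real^'d.\<close>

definition cone_H :: "(real^'d) set \<Rightarrow> (real^'d) set" where
  "cone_H A = {x. \<forall>a\<in>A. a \<bullet> x \<ge> 0}"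

definition is_PDD :: "(real^'d) set \<Rightarrow> (real^'d) set \<Rightarrow> bool" where
  "is_PDD A R \<longleftrightarrow> finite A \<and> finite R \<and> (\<forall>a\<in>A. \<forall>r\<in>R. a \<bullet> r \<ge> 0)"

text \<open>Set of active constraints (row of the incidence matrix) of a ray.\<close>
definition active :: "(real^'d) set \<Rightarrow> real^'d \<Rightarrow> (real^'d) set" where
  "active A r = {a\<in>A. a \<bullet> r = 0}"

definition A_irredundant :: "(real^'d) set \<Rightarrow> (real^'d) set \<Rightarrow> bool" where
  "A_irredundant A R \<longleftrightarrow> (\<forall>ri\<in>R. \<forall>rj\<in>R. ri \<noteq> rj \<longrightarrow> \<not> active A ri \<subseteq> active A rj)"

definition irred_step :: "(real^'d) set \<Rightarrow> (real^'d) set \<Rightarrow> (real^'d) set \<Rightarrow> bool" where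
  "irred_step A R S \<longleftrightarrow> (\<exists>r\<in>R. S = R - {r} \<and> (\<exists>r'\<in>R - {r}. active A r \<subseteq> active A r'))"

definition make_A_irredundant :: "(real^'d) set \<Rightarrow> (real^'d) set \<Rightarrow> (real^'d) set \<Rightarrow> bool" where
  "make_A_irredundant A R R' \<longleftrightarrow> (irred_step A)\<^sup>*\<^sup>* R R' \<and> A_irredundant A R'"

definition R_minus :: "(real^'d) set \<Rightarrow> (real^'d) set \<Rightarrow> (real^'d) set" where
  "R_minus Aq R = {r\<in>R. \<exists>a\<in>Aq. a \<bullet> r < 0}"

definition R_plus :: "(real^'d) set \<Rightarrow> (real^'d) set \<Rightarrow> (real^'d) set" where
  "R_plus Aq R = {r\<in>R. \<forall>a\<in>Aq. a \<bullet> r > 0}"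

definition R_zero :: "(real^'d) set \<Rightarrow> (real^'d) set \<Rightarrow> (real^'d) set" where
  "R_zero Aq R = R - R_minus Aq R - R_plus Aq R"

definition shoot_param :: "(real^'d) set \<Rightarrow> real^'d \<Rightarrow> real^'d \<Rightarrow> real" where
  "shoot_param Aq rp rm =
     Min {t. 0 \<le> t \<and> t \<le> 1 \<and> (\<exists>a\<in>Aq. a \<bullet> (rp + t *\<^sub>R (rm - rp)) = 0)}"

definition ray_shoot :: "(real^'d) set \<Rightarrow> real^'d \<Rightarrow> real^'d \<Rightarrow> real^'d" where
  "ray_shoot Aq rp rm = rp + shoot_param Aq rp rm *\<^sub>R (rm - rp)"

definition R_star :: "(real^'d) set \<Rightarrow> (real^'d) set \<Rightarrow> (real^'d) set" where
  "R_star Aq R = {ray_shoot Aq rp rm | rp rm. rp \<in> R_plus Aq R \<and> rm \<in> R_minus Aq R}"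

definition batch_intersection ::
  "(real^'d) set \<Rightarrow> (real^'d) set \<Rightarrow> (real^'d) set \<Rightarrow> (real^'d) set \<Rightarrow> (real^'d) set \<Rightarrow> bool" where
  "batch_intersection Ap Rp Aq A' R' \<longleftrightarrow>
     A' = Ap \<union> Aq \<and>
     make_A_irredundant A' (R_zero Aq Rp \<union> R_plus Aq Rp \<union> R_star Aq Rp) R'"

end

theory Submission
  imports Defs
begin

lemma steps_subset: "(irred_step A)\<^sup>*\<^sup>* R R' \<Longrightarrow> R' \<subseteq> R"
  by (induction rule: rtranclp_induct) (auto simp: irred_step_def)

lemma shoot_ok:
  fixes Aq Ap :: "(real^'d) set"
  assumes fin: "finite Aq" and rp: "\<forall>a\<in>Aq. a \<bullet> rp > 0" and am: "am \<in> Aq" "am \<bullet> rm < 0"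
  shows "0 \<le> shoot_param Aq rp rm \<and> shoot_param Aq rp rm \<le> 1
     \<and> (\<forall>a\<in>Aq. a \<bullet> ray_shoot Aq rp rm \<ge> 0)"
proof -
  define S where "S = {t. 0 \<le> t \<and> t \<le> 1 \<and> (\<exists>a\<in>Aq. a \<bullet> (rp + t *\<^sub>R (rm - rp)) = 0)}"
  have lin: "a \<bullet> (rp + t *\<^sub>R (rm - rp)) = a \<bullet> rp + t * (a \<bullet> rm - a \<bullet> rp)" for a t
    by (simp add: inner_add_right inner_diff_right algebra_simps)
  have sub: "S \<subseteq> (\<lambda>a. (a \<bullet> rp) / (a \<bullet> rp - a \<bullet> rm)) ` Aq"
  proof
    fix t assume "t \<in> S"
    then obtain a where a: "a \<in> Aq" "a \<bullet> rp + t * (a \<bullet> rm - a \<bullet> rp) = 0"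
      unfolding S_def lin by auto
    have "a \<bullet> rp > 0" using rp a by auto
    then have "a \<bullet> rp - a \<bullet> rm \<noteq> 0" using a by auto
    then have "t = (a \<bullet> rp) / (a \<bullet> rp - a \<bullet> rm)" using a
      by (simp add: field_simps)
    then show "t \<in> (\<lambda>a. (a \<bullet> rp) / (a \<bullet> rp - a \<bullet> rm)) ` Aq" using a by auto
  qed
  have finS: "finite S" using finite_subset[OF sub] fin by auto
  define t0 where "t0 = (am \<bullet> rp) / (am \<bullet> rp - am \<bullet> rm)"
  have p: "am \<bullet> rp > 0" using rp am by auto
  have "am \<bullet> rp + t0 * (am \<bullet> rm - am \<bullet> rp) = 0" unfolding t0_def using p am
    by (simp add: field_simps)
  moreover have "0 \<le> t0" "t0 \<le> 1" unfolding t0_def using p am by (auto simp: field_simps)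
  ultimately have "t0 \<in> S" unfolding S_def lin using am by auto
  then have ne: "S \<noteq> {}" by auto
  have ts: "shoot_param Aq rp rm = Min S" unfolding shoot_param_def S_def by simp
  have inS: "Min S \<in> S" using finS ne by simp
  have minle: "\<And>s. s \<in> S \<Longrightarrow> Min S \<le> s" using finS by simp
  let ?t = "Min S"
  have t01: "0 \<le> ?t" "?t \<le> 1" using inS unfolding S_def by auto
  have "a \<bullet> (rp + ?t *\<^sub>R (rm - rp)) \<ge> 0" if a: "a \<in> Aq" for a
  proof (rule ccontr)
    assume neg: "\<not> ?thesis"
    have pa: "a \<bullet> rp > 0" using rp a by auto
    let ?c = "a \<bullet> rm - a \<bullet> rp"
    have c: "a \<bullet> rp + ?t * ?c < 0" using neg unfolding lin by simp
    then have cneg: "?c < 0" using pa t01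
      by (smt (verit) mult_nonneg_nonneg)
    define s where "s = (a \<bullet> rp) / (- ?c)"
    have e: "a \<bullet> rp + s * ?c = 0" using cneg unfolding s_def by (simp add: field_simps)
    have "s < ?t"
    proof -
      have "?t * (-?c) > a \<bullet> rp" using c by (simp add: algebra_simps)
      then show ?thesis unfolding s_def using cneg by (simp add: field_simps)
    qed
    moreover have "0 \<le> s" unfolding s_def using pa cneg by simp
    ultimately have "s \<le> 1" using t01 by linarith
    then have "s \<in> S" unfolding S_def lin using e a \<open>0 \<le> s\<close> by auto
    then show False using minle \<open>s < ?t\<close> by force
  qed
  then show ?thesis using t01 unfolding ts ray_shoot_def ts by simp
qed

lemma seg_ok:
  fixes a rp rm :: "real^'d"
  assumes "a \<bullet> rp \<ge> 0" "a \<bullet> rm \<ge> 0" "0 \<le> t" "t \<le> 1"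
  shows "a \<bullet> (rp + t *\<^sub>R (rm - rp)) \<ge> 0"
proof -
  have "a \<bullet> (rp + t *\<^sub>R (rm - rp)) = (1 - t) * (a \<bullet> rp) + t * (a \<bullet> rm)"
    by (simp add: inner_add_right inner_diff_right algebra_simps)
  then show ?thesis using assms by (simp add: mult_nonneg_nonneg)
qed

lemma cone_sum:
  fixes A :: "(real^'d) set"
  assumes "\<forall>r\<in>R. r \<in> cone_H A" "\<forall>r\<in>R. l r \<ge> 0"
  shows "(\<Sum>r\<in>R. l r *\<^sub>R r) \<in> cone_H A"
  unfolding cone_H_def
proof (intro CollectI ballI)
  fix a assume a: "a \<in> A"
  have "a \<bullet> (\<Sum>r\<in>R. l r *\<^sub>R r) = (\<Sum>r\<in>R. l r * (a \<bullet> r))"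
    by (simp add: inner_sum_right)
  also have "\<dots> \<ge> 0"
    using assms a by (intro sum_nonneg) (auto simp: cone_H_def)
  finally show "a \<bullet> (\<Sum>r\<in>R. l r *\<^sub>R r) \<ge> 0" .
qed

theorem lemma4p1:
  fixes Ap Rp Aq A' R' :: "(real^'d) set"
  assumes "is_PDD Ap Rp"
    and "finite Aq"
    and "batch_intersection Ap Rp Aq A' R'"
  shows "cone_H A' = cone_H Ap \<inter> cone_H Aq \<and>
      {\<Sum>r\<in>R'. l r *\<^sub>R r | l. (\<forall>r\<in>R'. (l r :: real) \<ge> 0) \<and> (\<Sum>r\<in>R'. l r) \<le> 1}
           \<subseteq> cone_H Ap \<inter> cone_H Aq"
proof -
  have A': "A' = Ap \<union> Aq" and st: "(irred_step A')\<^sup>*\<^sup>* (R_zero Aq Rp \<union> R_plus Aq Rp \<union> R_star Aq Rp) R'"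
    using assms(3) unfolding batch_intersection_def make_A_irredundant_def by auto
  have c1: "cone_H A' = cone_H Ap \<inter> cone_H Aq" unfolding A' cone_H_def by auto
  have pdd: "\<forall>a\<in>Ap. \<forall>r\<in>Rp. a \<bullet> r \<ge> 0" using assms(1) unfolding is_PDD_def by auto
  have inC: "r \<in> cone_H Ap \<inter> cone_H Aq" if r: "r \<in> R_zero Aq Rp \<union> R_plus Aq Rp \<union> R_star Aq Rp" for r
  proof -
    { assume "r \<in> R_zero Aq Rp \<union> R_plus Aq Rp"
      then have ?thesis using pdd unfolding R_zero_def R_minus_def R_plus_def cone_H_def
        by (auto simp: not_less less_imp_le) }
    moreover
    { assume "r \<in> R_star Aq Rp"
      then obtain rp rm where r: "r = ray_shoot Aq rp rm" and rp: "rp \<in> R_plus Aq Rp"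
        and rm: "rm \<in> R_minus Aq Rp" unfolding R_star_def by auto
      obtain am where am: "am \<in> Aq" "am \<bullet> rm < 0" using rm unfolding R_minus_def by auto
      have rpp: "\<forall>a\<in>Aq. a \<bullet> rp > 0" "rp \<in> Rp" using rp unfolding R_plus_def by auto
      have rmR: "rm \<in> Rp" using rm unfolding R_minus_def by auto
      note so = shoot_ok[OF assms(2) rpp(1) am]
      have "r \<in> cone_H Aq" using so r unfolding cone_H_def by auto
      moreover have "r \<in> cone_H Ap" unfolding cone_H_def r ray_shoot_def
        using seg_ok so pdd rpp(2) rmR by blast
      ultimately have ?thesis by auto }
    ultimately show ?thesis using r by blast
  qed
  have "R' \<subseteq> R_zero Aq Rp \<union> R_plus Aq Rp \<union> R_star Aq Rp" using steps_subset[OF st] .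
  then have allin: "\<forall>r\<in>R'. r \<in> cone_H (Ap \<union> Aq)" using inC unfolding cone_H_def by blast
  have c2: "{\<Sum>r\<in>R'. l r *\<^sub>R r | l. (\<forall>r\<in>R'. (l r :: real) \<ge> 0) \<and> (\<Sum>r\<in>R'. l r) \<le> 1}
           \<subseteq> cone_H Ap \<inter> cone_H Aq"
  proof
    fix x assume "x \<in> {\<Sum>r\<in>R'. l r *\<^sub>R r | l. (\<forall>r\<in>R'. (l r :: real) \<ge> 0) \<and> (\<Sum>r\<in>R'. l r) \<le> 1}"
    then obtain l where x: "x = (\<Sum>r\<in>R'. l r *\<^sub>R r)" and l: "\<forall>r\<in>R'. l r \<ge> 0" by auto
    have "x \<in> cone_H (Ap \<union> Aq)" unfolding x using cone_sum[OF allin l] .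
    then show "x \<in> cone_H Ap \<inter> cone_H Aq" unfolding cone_H_def by auto
  qed
  show ?thesis using c1 c2 by blast
qed

end
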